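(* Let $\overline\eta\in(-\frac{\pi}{2},\frac{\pi}{2})^m$ and $\overline V\in\mathbb{R}^n_{>0}$ satisfy $E(\overline\eta)\overline V=\overline E_{fd}$ and \[ E(\overline\eta)-\mathrm{diag}(\overline V)^{-1}|D|\Gamma(\overline V)\mathrm{diag}(\boldsymbol{\sin}(\overline\eta))\mathrm{diag}(\boldsymbol{\cos}(\overline\eta))^{-1}\mathrm{diag}(\boldsymbol{\sin}(\overline\eta))|D|^T\mathrm{diag}(\overline V)^{-1}>0. \quad (\ast) \] Then the function \[ W_2(\eta,\overline\eta,V,\overline V)=-\mathbf{1}_m^T\Gamma(V)\boldsymbol{\cos}(\eta)+\mathbf{1}_m^T\Gamma(\overline V)\boldsymbol{\cos}(\overline\eta)-(\Gamma(\overline V)\boldsymbol{\sin}(\overline\eta))^T(\eta-\overline\eta)-\overline E_{fd}^T(V-\overline V)+\tfrac12V^TFV-\tfrac12\overline V^TF\overline V, \] where $F$ is the diagonal matrix with $F_{ii}=\frac{1-B_{ii}(X_{di}-X'_{di})}{X_{di}-X'_{di}}$, has a strict local minimum (as a function of $(\eta,V)$) at $(\overline\eta,\overline V)$.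
   Context: Standing setup (power network model). $\mathcal{G}=(\mathcal{V},\mathcal{E})$ is a connected undirected graph with node set $\{1,\dots,n\}$ and $m$ edges; each edge $k=\{i,j\}$ is given an arbitrary orientation, and $D\in\mathbb{R}^{n\times m}$ is the incidence matrix: $d_{ik}=+1$ if $i$ is the positive end of edge $k$, $-1$ if $i$ is the negative end, $0$ otherwise. $|D|$ denotes the matrix of entrywise absolute values of $D$. $\mathbf{1}_n$ is the all-ones vector. For each edge $k=\{i,j\}$ there is a susceptance $B_{ij}=B_{ji}>0$; each node has a self-susceptance $B_{ii}<0$ with $|B_{ii}|>\sum_{j\in\mathcal{N}_i}|B_{ij}|$ ($\mathcal{N}_i$ the neighbours of $i$ in $\mathcal{G}$), and reactances $X_{di}>X'_{di}>0$. For $V\in\mathbb{R}^n$, $\Gamma(V)=\mathrm{diag}(\gamma_1,\dots,\gamma_m)$ with $\gamma_k=V_iV_jB_{ij}$ for edge $k=\{i,j\}$. For $\eta\in\mathbb{R}^m$, $E(\eta)\in\mathbb{R}^{n\times n}$ is the symmetric matrix with $E_{ii}=\frac{1-B_{ii}(X_{di}-X'_{di})}{X_{di}-X'_{di}}$, $E_{ij}=-B_{ij}\cos(\eta_k)$ if $k=\{i,j\}$ is an edge, and $E_{ij}=0$ otherwise. $\boldsymbol{\sin}$, $\boldsymbol{\cos}$ act componentwise. $M,A,T$ are diagonal positive definite $n\times n$ matrices ($A=\mathrm{diag}(A_i)$), and $\overline E_{fd}\in\mathbb{R}^n$ is a constant vector. The network dynamics, with input $u\in\mathbb{R}^n$ (power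 generation) and demand $P^l$, are \[ \dot\eta=D^T\omega,\quad M\dot\omega=u-D\Gamma(V)\boldsymbol{\sin}(\eta)-A\omega-P^l,\quad T\dot V=-E(\eta)V+\overline E_{fd},\quad y=\omega, \] with state $(\eta,\omega,V)\in\mathbb{R}^m\times\mathbb{R}^n\times\mathbb{R}^n$. *)

theory Defs
  imports "HOL-Analysis.Analysis"
begin

text \<open>Graph: nodes are the finite type 'n, edges the finite type 'm. Edge k has
  positive end pe k and negative end ne k (arbitrary orientation), so edge k = {pe k, ne k}.\<close>

definition edge_joins :: "('m \<Rightarrow> 'n) \<Rightarrow> ('m \<Rightarrow> 'n) \<Rightarrow> 'm \<Rightarrow> 'n \<Rightarrow> 'n \<Rightarrow> bool" where
  "edge_joins pe ne k i j \<longleftrightarrow> (pe k = i \<and> ne k = j) \<or> (pe k = j \<and> ne k = i)"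

definition adjacent :: "('m \<Rightarrow> 'n) \<Rightarrow> ('m \<Rightarrow> 'n) \<Rightarrow> 'n \<Rightarrow> 'n \<Rightarrow> bool" where
  "adjacent pe ne i j \<longleftrightarrow> (\<exists>k. edge_joins pe ne k i j)"

definition neighbours :: "('m \<Rightarrow> 'n) \<Rightarrow> ('m \<Rightarrow> 'n) \<Rightarrow> 'n \<Rightarrow> 'n set" where
  "neighbours pe ne i = {j. adjacent pe ne i j}"

definition simple_connected_graph :: "('m \<Rightarrow> 'n) \<Rightarrow> ('m \<Rightarrow> 'n) \<Rightarrow> bool" where
  "simple_connected_graph pe ne \<longleftrightarrow>
     (\<forall>k. pe k \<noteq> ne k) \<and>
     (\<forall>k l. {pe k, ne k} = {pe l, ne l} \<longrightarrow> k = l) \<and>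
     (\<forall>i j. (adjacent pe ne)\<^sup>*\<^sup>* i j)"

definition incidence :: "('m::finite \<Rightarrow> 'n::finite) \<Rightarrow> ('m \<Rightarrow> 'n) \<Rightarrow> real^'m^'n" where
  "incidence pe ne = (\<chi> i k. if i = pe k then 1 else if i = ne k then -1 else 0)"

definition abs_mat :: "real^'m^'n \<Rightarrow> real^'m^'n" where
  "abs_mat A = (\<chi> i k. \<bar>A $ i $ k\<bar>)"

definition diagm :: "real^'n \<Rightarrow> real^'n^'n" where
  "diagm v = (\<chi> i j. if i = j then v $ i else 0)"

definition vsin :: "real^'m \<Rightarrow> real^'m" where "vsin x = (\<chi> k. sin (x $ k))"
definition vcos :: "real^'m \<Rightarrow> real^'m" where "vcos x = (\<chi> k. cos (x $ k))"

definition gam :: "('m::finite \<Rightarrow> 'n::finite) \<Rightarrow> ('m \<Rightarrow> 'n) \<Rightarrow> real^'n^'n \<Rightarrow> real^'n \<Rightarrow> real^'m" where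
  "gam pe ne B V = (\<chi> k. V $ pe k * V $ ne k * B $ pe k $ ne k)"

definition Gamma :: "('m::finite \<Rightarrow> 'n::finite) \<Rightarrow> ('m \<Rightarrow> 'n) \<Rightarrow> real^'n^'n \<Rightarrow> real^'n \<Rightarrow> real^'m^'m" where
  "Gamma pe ne B V = diagm (gam pe ne B V)"

definition Fdiag :: "real^'n^'n \<Rightarrow> real^'n \<Rightarrow> real^'n \<Rightarrow> real^'n" where
  "Fdiag B Xd Xdp = (\<chi> i. (1 - B $ i $ i * (Xd $ i - Xdp $ i)) / (Xd $ i - Xdp $ i))"

definition Fmat :: "real^'n^'n \<Rightarrow> real^'n \<Rightarrow> real^'n \<Rightarrow> real^'n^'n" where
  "Fmat B Xd Xdp = diagm (Fdiag B Xd Xdp)"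

definition Emat :: "('m::finite \<Rightarrow> 'n::finite) \<Rightarrow> ('m \<Rightarrow> 'n) \<Rightarrow> real^'n^'n \<Rightarrow> real^'n \<Rightarrow> real^'n
                    \<Rightarrow> real^'m \<Rightarrow> real^'n^'n" where
  "Emat pe ne B Xd Xdp eta = (\<chi> i j.
     if i = j then Fdiag B Xd Xdp $ i
     else if adjacent pe ne i j then - B $ i $ j * cos (eta $ (THE k. edge_joins pe ne k i j))
     else 0)"

definition pos_def :: "real^'n^'n \<Rightarrow> bool" where
  "pos_def M \<longleftrightarrow> transpose M = M \<and> (\<forall>x. x \<noteq> 0 \<longrightarrow> x \<bullet> (M *v x) > 0)"

definition W2 :: "('m::finite \<Rightarrow> 'n::finite) \<Rightarrow> ('m \<Rightarrow> 'n) \<Rightarrow> real^'n^'n \<Rightarrow> real^'n \<Rightarrow> real^'n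
                  \<Rightarrow> real^'n \<Rightarrow> real^'m \<Rightarrow> real^'m \<Rightarrow> real^'n \<Rightarrow> real^'n \<Rightarrow> real" where
  "W2 pe ne B Xd Xdp Efd eta etab V Vb =
     - (1 \<bullet> (Gamma pe ne B V *v vcos eta))
     + (1 \<bullet> (Gamma pe ne B Vb *v vcos etab))
     - (Gamma pe ne B Vb *v vsin etab) \<bullet> (eta - etab)
     - Efd \<bullet> (V - Vb)
     + (1/2) * (V \<bullet> (Fmat B Xd Xdp *v V))
     - (1/2) * (Vb \<bullet> (Fmat B Xd Xdp *v Vb))"

definition strict_local_min :: "('a::metric_space \<Rightarrow> real) \<Rightarrow> 'a \<Rightarrow> bool" where
  "strict_local_min f x0 \<longleftrightarrow> (\<exists>e>0. \<forall>x. x \<noteq> x0 \<and> dist x x0 < e \<longrightarrow> f x0 < f x)"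

end

theory Submission
  imports Defs
begin

lemma if_mult0: "(if P then a else 0) * (b::real) = (if P then a * b else 0)" by simp
lemma if_mult0': "(b::real) * (if P then a else 0) = (if P then b * a else 0)" by simp

lemma diagm_mv: "(diagm d *v y) $ k = d $ k * y $ k"
  by (simp add: diagm_def matrix_vector_mult_def if_mult0)

lemma diagm_mm: "diagm d ** diagm e = diagm (\<chi> i. d $ i * e $ i)"
  by (auto simp add: diagm_def matrix_matrix_mult_def vec_eq_iff if_mult0 if_mult0')

lemma matrix_inv_eq:
  fixes A :: "real^'n^'n"
  assumes "A ** A' = mat 1" "A' ** A = mat 1"
  shows "matrix_inv A = A'"
proof -
  let ?P = "\<lambda>X. A ** X = mat 1 \<and> X ** A = mat 1"
  have "?P (matrix_inv A)" unfolding matrix_inv_def by (rule someI[of ?P A']) (use assms in auto)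
  then have "matrix_inv A = matrix_inv A ** (A ** A')" using assms by simp
  also have "\<dots> = (matrix_inv A ** A) ** A'" by (simp add: matrix_mul_assoc)
  also have "\<dots> = A'" using \<open>?P (matrix_inv A)\<close> by simp
  finally show ?thesis .
qed

lemma diagm_inv:
  assumes "\<forall>i. d $ i \<noteq> (0::real)"
  shows "matrix_inv (diagm d) = diagm (\<chi> i. 1 / d $ i)"
  apply (rule matrix_inv_eq)
  using assms by (simp_all add: diagm_mm, simp_all add: mat_def diagm_def vec_eq_iff)

lemma one_inner: "(1::real^'m) \<bullet> y = (\<Sum>k\<in>UNIV. y $ k)"
  by (simp add: inner_vec_def)

lemma sin_rem: fixes x :: real shows "\<bar>sin x - x\<bar> \<le> \<bar>x\<bar>^3 / 6"
  using Maclaurin_sin_bound[of x 3] by (simp add: sin_coeff_def numeral_3_eq_3 lessThan_Suc fact_numeral)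

lemma cos_rem: fixes x :: real shows "\<bar>cos x - (1 - x^2/2)\<bar> \<le> \<bar>x\<bar>^3 / 6"
proof -
  obtain t where t: "cos x = (\<Sum>m<3. cos_coeff m * x ^ m) + (cos(t + 1/2 * real 3 * pi) / fact 3) * x ^ 3"
    using Maclaurin_cos_expansion[of x 3] by blast
  have s: "(\<Sum>m<3. cos_coeff m * x ^ m) = 1 - x^2/2"
    by (simp add: cos_coeff_def numeral_3_eq_3 lessThan_Suc fact_numeral power2_eq_square)
  have "\<bar>cos x - (1 - x^2/2)\<bar> = \<bar>cos(t + 1/2 * real 3 * pi)\<bar> / 6 * \<bar>x\<bar>^3"
    using t s by (simp add: abs_mult power_abs fact_numeral)
  also have "\<dots> \<le> 1 / 6 * \<bar>x\<bar>^3"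
    by (intro mult_right_mono divide_right_mono) auto
  finally show ?thesis by simp
qed

lemma abs_prod_le: "\<bar>a\<bar> \<le> A \<Longrightarrow> \<bar>b\<bar> \<le> B' \<Longrightarrow> \<bar>a * b\<bar> \<le> A * (B'::real)"
  by (simp add: abs_mult mult_mono')

lemma Rbound:
  fixes x p q r Vi Vj b c s e1 e2 :: real
  assumes x: "\<bar>x\<bar> \<le> r" and p: "\<bar>p\<bar> \<le> r" and q: "\<bar>q\<bar> \<le> r" and r0: "0 \<le> r" and r1: "r \<le> 1"
    and c: "\<bar>c\<bar> \<le> 1" and s: "\<bar>s\<bar> \<le> 1" and Vi: "Vi > 0" and Vj: "Vj > 0" and b: "b > 0"
    and e1: "\<bar>e1\<bar> \<le> r^3/6" and e2: "\<bar>e2\<bar> \<le> r^3/6"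
  shows "\<bar>(b*(Vj*p + Vi*q) + b*p*q)*c*x^2/2 + (Vi+p)*(Vj+q)*b*c*e1 + s*b*p*q*x + s*(Vi+p)*(Vj+q)*b*e2\<bar>
         \<le> 3*b*(Vi+1)*(Vj+1)*r^3"
proof -
  have pq: "\<bar>p*q\<bar> \<le> r" 
  proof -
    have "\<bar>p*q\<bar> \<le> r * r" by (rule abs_prod_le[OF p q])
    also have "\<dots> \<le> 1 * r" by (rule mult_right_mono[OF r1 r0])
    finally show ?thesis by simp
  qed
  have d: "\<bar>b*(Vj*p + Vi*q) + b*p*q\<bar> \<le> b*(Vi+Vj+1)*r"
  proof -
    have "\<bar>Vj*p\<bar> \<le> Vj*r" using abs_prod_le[of Vj Vj p r] Vj p by simp
    moreover have "\<bar>Vi*q\<bar> \<le> Vi*r" using abs_prod_le[of Vi Vi q r] Vi q by simp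
    ultimately have "\<bar>Vj*p + Vi*q + p*q\<bar> \<le> (Vi+Vj+1)*r" using pq by (simp add: algebra_simps)
    then have "b * \<bar>Vj*p + Vi*q + p*q\<bar> \<le> b * ((Vi+Vj+1)*r)" using b by (simp add: mult_left_mono)
    moreover have "b*(Vj*p + Vi*q) + b*p*q = b*(Vj*p+Vi*q+p*q)" by (simp add: algebra_simps)
    ultimately show ?thesis using b by (simp add: abs_mult mult.assoc)
  qed
  have cx: "\<bar>c*x^2/2\<bar> \<le> r^2/2"
  proof -
    have "\<bar>x^2\<bar> \<le> r^2" using x by (simp add: power_mono abs_le_iff power2_le_iff_abs_le r0)
    then have "\<bar>c * x^2\<bar> \<le> 1 * r^2" by (rule abs_prod_le[OF c])
    then show ?thesis by simp
  qed
  have g: "\<bar>(Vi+p)*(Vj+q)\<bar> \<le> (Vi+1)*(Vj+1)"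
    apply (rule abs_prod_le) using Vi Vj p q r1 by auto
  have T1: "\<bar>(b*(Vj*p + Vi*q) + b*p*q)*c*x^2/2\<bar> \<le> b*(Vi+Vj+1)*r * (r^2/2)"
    using abs_prod_le[OF d cx] by (simp add: mult.assoc)
  have T2: "\<bar>(Vi+p)*(Vj+q)*b*c*e1\<bar> \<le> (Vi+1)*(Vj+1) * b * (r^3/6)"
  proof -
    have "\<bar>c*e1\<bar> \<le> 1 * (r^3/6)" by (rule abs_prod_le[OF c e1])
    then have "\<bar>b*(c*e1)\<bar> \<le> b * (r^3/6)" using b by (simp add: abs_mult mult_left_mono)
    from abs_prod_le[OF g this] show ?thesis by (simp add: mult.assoc)
  qed
  have T3: "\<bar>s*b*p*q*x\<bar> \<le> b * (r * r * r)"
  proof -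
    have "\<bar>(p*q)*x\<bar> \<le> (r * r) * r" by (rule abs_prod_le[OF abs_prod_le[OF p q] x])
    then have "\<bar>s*((p*q)*x)\<bar> \<le> 1 * (r*r*r)" by (rule abs_prod_le[OF s])
    then have "b*\<bar>s*((p*q)*x)\<bar> \<le> b * (r*r*r)" using b by (simp add: mult_left_mono)
    moreover have "\<bar>s*b*p*q*x\<bar> = b*\<bar>s*((p*q)*x)\<bar>" using b by (simp add: abs_mult algebra_simps)
    ultimately show ?thesis by simp
  qed
  have T4: "\<bar>s*(Vi+p)*(Vj+q)*b*e2\<bar> \<le> (Vi+1)*(Vj+1) * b * (r^3/6)"
  proof -
    have "\<bar>s*e2\<bar> \<le> 1 * (r^3/6)" by (rule abs_prod_le[OF s e2])
    then have "\<bar>b*(s*e2)\<bar> \<le> b * (r^3/6)" using b by (simp add: abs_mult mult_left_mono)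
    from abs_prod_le[OF g this] have A: "\<bar>(Vi + p) * (Vj + q) * (b * (s * e2))\<bar> \<le> (Vi + 1) * (Vj + 1) * (b * (r ^ 3 / 6))" .
    have e: "s*(Vi+p)*(Vj+q)*b*e2 = (Vi + p) * (Vj + q) * (b * (s * e2))" by (simp add: algebra_simps)
    have f: "(Vi+1)*(Vj+1) * b * (r^3/6) = (Vi + 1) * (Vj + 1) * (b * (r ^ 3 / 6))" by (simp add: algebra_simps)
    show ?thesis unfolding e f by (rule A)
  qed
  have sum: "b*(Vi+Vj+1)*r * (r^2/2) + (Vi+1)*(Vj+1) * b * (r^3/6) + b * (r * r * r) + (Vi+1)*(Vj+1) * b * (r^3/6)
        \<le> 3*b*(Vi+1)*(Vj+1)*r^3"
  proof -
    have r3: "0 \<le> b * r^3" using b r0 by simp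
    have h: "0 \<le> Vi*Vj" using Vi Vj by simp
    have e: "(Vi+1)*(Vj+1) = Vi*Vj+Vi+Vj+1" by (simp add: algebra_simps)
    have "(Vi+Vj+1)/2 + 1 + (Vi+1)*(Vj+1)/3 \<le> 3*((Vi+1)*(Vj+1))"
      unfolding e using Vi Vj h by (simp add: field_simps)
    then have "(Vi+Vj+1)/2 + 1 + (Vi+1)*(Vj+1)/3 \<le> 3*(Vi+1)*(Vj+1)" by (simp only: mult.assoc)
    then have X: "b * r^3 * ((Vi+Vj+1)/2 + 1 + (Vi+1)*(Vj+1)/3) \<le> b * r^3 * (3*(Vi+1)*(Vj+1))"
      by (rule mult_left_mono[OF _ r3])
    have "b*(Vi+Vj+1)*r * (r^2/2) + (Vi+1)*(Vj+1) * b * (r^3/6) + b * (r * r * r) + (Vi+1)*(Vj+1) * b * (r^3/6)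
       = b * r^3 * ((Vi+Vj+1)/2 + 1 + (Vi+1)*(Vj+1)/3)"
      by (simp add: field_simps power3_eq_cube power2_eq_square)
    also note X
    also have "b * r^3 * (3*(Vi+1)*(Vj+1)) = 3*b*(Vi+1)*(Vj+1)*r^3" by (simp add: algebra_simps)
    finally show ?thesis .
  qed
  have tri: "\<bar>a1+a2+a3+a4\<bar> \<le> \<bar>a1\<bar>+\<bar>a2\<bar>+\<bar>a3\<bar>+\<bar>a4\<bar>" for a1 a2 a3 a4 :: real by linarith
  show ?thesis using tri[of "(b*(Vj*p + Vi*q) + b*p*q)*c*x^2/2" "(Vi+p)*(Vj+q)*b*c*e1" "s*b*p*q*x" "s*(Vi+p)*(Vj+q)*b*e2"]
      T1 T2 T3 T4 sum by linarith
qed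

locale L =
  fixes pe ne :: "'m::finite \<Rightarrow> 'n::finite"
    and B :: "real^'n^'n" and Xd Xdp :: "real^'n" and Efd :: "real^'n"
    and etab :: "real^'m" and Vb :: "real^'n"
  assumes graph: "simple_connected_graph pe ne"
    and B_sym: "\<forall>i j. B $ i $ j = B $ j $ i"
begin

lemma pe_ne: "pe k \<noteq> ne k" using graph by (simp add: simple_connected_graph_def)
lemma edge_uniq: "{pe k, ne k} = {pe l, ne l} \<Longrightarrow> k = l" using graph by (simp add: simple_connected_graph_def)

lemma adj_irrefl: "\<not> adjacent pe ne i i"
  using pe_ne by (auto simp: adjacent_def edge_joins_def) metis+

lemma the1: "(THE k. edge_joins pe ne k (pe l) (ne l)) = l"
  apply (rule the_equality)
   apply (simp add: edge_joins_def)
  apply (rule edge_uniq[symmetric])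
  apply (auto simp: edge_joins_def)
  done

lemma the2: "(THE k. edge_joins pe ne k (ne l) (pe l)) = l"
  apply (rule the_equality)
   apply (simp add: edge_joins_def)
  apply (rule edge_uniq[symmetric])
  apply (auto simp: edge_joins_def)
  done

lemma pairs: "{p. adjacent pe ne (fst p) (snd p)} = range (\<lambda>k. (pe k, ne k)) \<union> range (\<lambda>k. (ne k, pe k))"
  by (auto simp: adjacent_def edge_joins_def)

lemma pairs_disj: "range (\<lambda>k. (pe k, ne k)) \<inter> range (\<lambda>k. (ne k, pe k)) = {}"
proof -
  { fix k l assume "pe k = ne l" "ne k = pe l"
    then have "{pe k, ne k} = {pe l, ne l}" by auto
    then have "k = l" by (rule edge_uniq)
    with \<open>pe k = ne l\<close> pe_ne have False by metis }
  then show ?thesis by auto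
qed

lemma inj1: "inj (\<lambda>k. (pe k, ne k))"
  by (rule injI) (rule edge_uniq, auto)
lemma inj2: "inj (\<lambda>k. (ne k, pe k))"
  by (rule injI) (rule edge_uniq, auto)

lemma Emat_form:
  "u \<bullet> (Emat pe ne B Xd Xdp eta *v w) =
     (\<Sum>i\<in>UNIV. Fdiag B Xd Xdp $ i * u$i * w$i)
     - (\<Sum>k\<in>UNIV. B$pe k$ne k * cos (eta$k) * (u$pe k * w$ne k + u$ne k * w$pe k))"
proof -
  define h where "h i j = (if adjacent pe ne i j then - B $ i $ j * cos (eta $ (THE k. edge_joins pe ne k i j)) else 0)" for i j
  define g where "g p = u $ fst p * h (fst p) (snd p) * w $ snd p" for p
  have E: "Emat pe ne B Xd Xdp eta $ i $ j = (if i = j then Fdiag B Xd Xdp $ i else 0) + h i j" for i j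
    by (simp add: Emat_def h_def adj_irrefl)
  have "u \<bullet> (Emat pe ne B Xd Xdp eta *v w) = (\<Sum>i\<in>UNIV. \<Sum>j\<in>UNIV. u$i * Emat pe ne B Xd Xdp eta $ i $ j * w$j)"
    by (simp add: inner_vec_def matrix_vector_mult_def sum_distrib_left mult.assoc)
  also have "\<dots> = (\<Sum>i\<in>UNIV. Fdiag B Xd Xdp $ i * u$i * w$i) + (\<Sum>i\<in>UNIV. \<Sum>j\<in>UNIV. g (i,j))"
    by (simp add: E g_def algebra_simps sum.distrib if_mult0 if_mult0')
  also have "(\<Sum>i\<in>UNIV. \<Sum>j\<in>UNIV. g (i,j)) = (\<Sum>p\<in>UNIV. g p)"
    by (simp add: sum.cartesian_product' UNIV_Times_UNIV[symmetric] del: UNIV_Times_UNIV)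
  also have "\<dots> = (\<Sum>p\<in>{p. adjacent pe ne (fst p) (snd p)}. g p)"
    by (rule sum.mono_neutral_right) (auto simp: g_def h_def)
  also have "\<dots> = (\<Sum>p\<in>range (\<lambda>k. (pe k, ne k)). g p) + (\<Sum>p\<in>range (\<lambda>k. (ne k, pe k)). g p)"
    unfolding pairs by (rule sum.union_disjoint) (use pairs_disj in auto)
  also have "\<dots> = (\<Sum>k\<in>UNIV. g (pe k, ne k)) + (\<Sum>k\<in>UNIV. g (ne k, pe k))"
    by (simp add: sum.reindex inj1 inj2)
  also have "\<dots> = - (\<Sum>k\<in>UNIV. B$pe k$ne k * cos (eta$k) * (u$pe k * w$ne k + u$ne k * w$pe k))"
  proof -
    have a: "adjacent pe ne (pe k) (ne k)" "adjacent pe ne (ne k) (pe k)" for k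
      by (auto simp: adjacent_def edge_joins_def)
    show ?thesis
      by (simp add: g_def h_def a the1 the2 B_sym[rule_format, of "ne _"] sum.distrib[symmetric]
           sum_negf[symmetric] algebra_simps)
  qed
  finally show ?thesis by simp
qed

end

locale L2 = L +
  assumes B_edge: "\<forall>k. B $ pe k $ ne k > 0"
    and etab_range: "\<forall>k. - (pi/2) < etab $ k \<and> etab $ k < pi/2"
    and Vb_pos: "\<forall>i. Vb $ i > 0"
    and equil: "Emat pe ne B Xd Xdp etab *v Vb = Efd"
    and cond: "pos_def (Emat pe ne B Xd Xdp etab
                 - matrix_inv (diagm Vb) ** abs_mat (incidence pe ne) ** Gamma pe ne B Vb
                   ** diagm (vsin etab) ** matrix_inv (diagm (vcos etab)) ** diagm (vsin etab)
                   ** transpose (abs_mat (incidence pe ne)) ** matrix_inv (diagm Vb))"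
begin

definition "gb k = Vb$pe k * Vb$ne k * B$pe k$ne k"
definition "cc k = cos (etab$k)"
definition "ss k = sin (etab$k)"
definition "wv v k = v$pe k / Vb$pe k + v$ne k / Vb$ne k"
definition "Eb = Emat pe ne B Xd Xdp etab"

lemma gb_pos: "gb k > 0" using B_edge Vb_pos by (simp add: gb_def)
lemma cc_pos: "cc k > 0" unfolding cc_def using etab_range by (intro cos_gt_zero_pi) auto
lemma Vb_ne: "Vb $ i \<noteq> 0" using Vb_pos by (metis less_irrefl)

lemma colsum: "(\<Sum>i\<in>UNIV. abs_mat (incidence pe ne) $ i $ k * f i) = f (pe k) + f (ne k)"
proof -
  have "abs_mat (incidence pe ne) $ i $ k = (if i = pe k then 1 else 0) + (if i = ne k then 1 else 0)" for i
    using pe_ne[of k] by (auto simp: abs_mat_def incidence_def)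
  then show ?thesis using pe_ne[of k] by (simp add: distrib_right sum.distrib if_mult0)
qed

lemma Sform: "v \<bullet> ((Emat pe ne B Xd Xdp etab
                 - matrix_inv (diagm Vb) ** abs_mat (incidence pe ne) ** Gamma pe ne B Vb
                   ** diagm (vsin etab) ** matrix_inv (diagm (vcos etab)) ** diagm (vsin etab)
                   ** transpose (abs_mat (incidence pe ne)) ** matrix_inv (diagm Vb)) *v v)
   = v \<bullet> (Eb *v v) - (\<Sum>k\<in>UNIV. gb k * ss k^2 / cc k * (wv v k)^2)"
proof -
  let ?A = "abs_mat (incidence pe ne)"
  have Vi: "matrix_inv (diagm Vb) = diagm (\<chi> i. 1 / Vb $ i)" by (rule diagm_inv) (use Vb_ne in auto)
  have Ci: "matrix_inv (diagm (vcos etab)) = diagm (\<chi> k. 1 / cc k)"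
    by (subst diagm_inv) (use cc_pos in \<open>auto simp: vcos_def cc_def[symmetric]\<close>, metis less_irrefl)
  define y where "y = (diagm (\<chi> i. 1 / Vb $ i) *v v) v* ?A"
  have y: "y $ k = wv v k" for k
  proof -
    have "y $ k = (\<Sum>i\<in>UNIV. ?A $ i $ k * (v$i / Vb$i))"
      by (simp add: y_def vector_matrix_mult_def diagm_mv algebra_simps)
    then show ?thesis using colsum[of k "\<lambda>i. v$i / Vb$i"] by (simp add: wv_def)
  qed
  define z where "z = Gamma pe ne B Vb *v (diagm (vsin etab) *v (diagm (\<chi> k. 1 / cc k) *v (diagm (vsin etab) *v y)))"
  have z: "z $ k = gb k * ss k^2 / cc k * wv v k" for k
    by (simp add: z_def Gamma_def diagm_mv y vsin_def ss_def[symmetric] gam_def gb_def[symmetric] power2_eq_square)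
  have "v \<bullet> (diagm (\<chi> i. 1 / Vb $ i) *v (?A *v z)) = (\<Sum>i\<in>UNIV. \<Sum>k\<in>UNIV. ?A $ i $ k * (v $ i / Vb $ i * z $ k))"
  proof -
    have "v \<bullet> (diagm (\<chi> i. 1 / Vb $ i) *v (?A *v z)) = (\<Sum>i\<in>UNIV. v$i / Vb$i * (?A *v z)$i)"
      by (simp add: inner_vec_def diagm_mv algebra_simps)
    also have "\<dots> = (\<Sum>i\<in>UNIV. \<Sum>k\<in>UNIV. ?A $ i $ k * (v $ i / Vb $ i * z $ k))"
      by (simp add: matrix_vector_mult_def sum_distrib_left algebra_simps)
    finally show ?thesis .
  qed
  also have "\<dots> = (\<Sum>k\<in>UNIV. \<Sum>i\<in>UNIV. ?A $ i $ k * (v $ i / Vb $ i * z $ k))" by (rule sum.swap)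
  also have "\<dots> = (\<Sum>k\<in>UNIV. gb k * ss k^2 / cc k * (wv v k)^2)"
  proof (rule sum.cong[OF refl])
    fix k
    have "(\<Sum>i\<in>UNIV. ?A $ i $ k * (v $ i / Vb $ i * z $ k)) = (\<Sum>i\<in>UNIV. ?A $ i $ k * (v $ i / Vb $ i)) * z $ k"
      by (simp add: sum_distrib_right mult.assoc)
    also have "\<dots> = wv v k * z $ k" using colsum[of k "\<lambda>i. v$i / Vb$i"] by (simp add: wv_def)
    finally show "(\<Sum>i\<in>UNIV. ?A $ i $ k * (v $ i / Vb $ i * z $ k)) = gb k * ss k^2 / cc k * (wv v k)^2"
      by (simp add: z power2_eq_square)
  qed
  finally have M: "v \<bullet> (diagm (\<chi> i. 1 / Vb $ i) *v (?A *v z)) = (\<Sum>k\<in>UNIV. gb k * ss k^2 / cc k * (wv v k)^2)" .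
  show ?thesis
    unfolding Vi Ci matrix_vector_mult_diff_rdistrib inner_diff_right Eb_def
    by (simp add: matrix_vector_mul_assoc[symmetric] M[unfolded z_def y_def])
qed

end

context L2 begin

definition "bb k = B $ pe k $ ne k"
definition "FF i = Fdiag B Xd Xdp $ i"
definition "Qv v = (\<Sum>i\<in>UNIV. FF i * v$i * v$i) - (\<Sum>k\<in>UNIV. bb k * cc k * (v$pe k * v$ne k + v$ne k * v$pe k))"
definition "q x v = 1/2 * Qv v + (\<Sum>k\<in>UNIV. 1/2 * gb k * cc k * (x$k)^2 + x$k * ss k * gb k * wv v k)"
definition "Sm = Emat pe ne B Xd Xdp etab
                 - matrix_inv (diagm Vb) ** abs_mat (incidence pe ne) ** Gamma pe ne B Vb
                   ** diagm (vsin etab) ** matrix_inv (diagm (vcos etab)) ** diagm (vsin etab)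
                   ** transpose (abs_mat (incidence pe ne)) ** matrix_inv (diagm Vb)"

lemma Eb_form: "u \<bullet> (Eb *v w) = (\<Sum>i\<in>UNIV. FF i * u$i * w$i) - (\<Sum>k\<in>UNIV. bb k * cc k * (u$pe k * w$ne k + u$ne k * w$pe k))"
  unfolding Eb_def Emat_form FF_def bb_def cc_def by simp

lemma Qv_eq: "Qv v = v \<bullet> (Eb *v v)" by (simp add: Eb_form Qv_def)

lemma q_sq: "q x v = 1/2 * (v \<bullet> (Sm *v v)) + 1/2 * (\<Sum>k\<in>UNIV. gb k * cc k * (x$k + ss k * wv v k / cc k)^2)"
proof -
  have k: "1/2 * gb k * cc k * (x$k)^2 + x$k * ss k * gb k * wv v k
        = 1/2 * (gb k * cc k * (x$k + ss k * wv v k / cc k)^2) - 1/2 * (gb k * ss k^2 / cc k * (wv v k)^2)" for k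
    using cc_pos[of k] by (simp add: field_simps power2_eq_square)
  have "q x v = 1/2 * (v \<bullet> (Eb *v v)) + (\<Sum>k\<in>UNIV. 1/2 * (gb k * cc k * (x$k + ss k * wv v k / cc k)^2) - 1/2 * (gb k * ss k^2 / cc k * (wv v k)^2))"
    unfolding q_def Qv_eq k ..
  also have "\<dots> = 1/2 * (v \<bullet> (Eb *v v)) + 1/2 * (\<Sum>k\<in>UNIV. gb k * cc k * (x$k + ss k * wv v k / cc k)^2) - 1/2 * (\<Sum>k\<in>UNIV. gb k * ss k^2 / cc k * (wv v k)^2)"
    by (simp only: sum_subtractf sum_distrib_left[symmetric])
  also have "\<dots> = 1/2 * (v \<bullet> (Sm *v v)) + 1/2 * (\<Sum>k\<in>UNIV. gb k * cc k * (x$k + ss k * wv v k / cc k)^2)"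
    unfolding Sm_def Sform by (simp add: algebra_simps)
  finally show ?thesis .
qed
lemma wv0: "wv 0 k = 0" by (simp add: wv_def)

lemma q_pos: assumes "(x, v) \<noteq> 0" shows "q x v > 0"
proof (cases "v = 0")
  case False
  have "v \<bullet> (Sm *v v) > 0" using cond False unfolding pos_def_def Sm_def by blast
  moreover have "(\<Sum>k\<in>UNIV. gb k * cc k * (x$k + ss k * wv v k / cc k)^2) \<ge> 0"
    by (intro sum_nonneg mult_nonneg_nonneg) (use gb_pos cc_pos in \<open>auto simp: less_imp_le\<close>)
  ultimately show ?thesis unfolding q_sq by simp
next
  case True
  then have "x \<noteq> 0" using assms by (simp add: zero_prod_def)
  then obtain j where j: "x $ j \<noteq> 0" by (auto simp: vec_eq_iff)
  have pos: "0 \<le> gb k * cc k * (x$k)^2" for k using gb_pos[of k] cc_pos[of k] by simp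
  have "0 < gb j * cc j * (x$j)^2" using gb_pos[of j] cc_pos[of j] j by simp
  also have "\<dots> \<le> (\<Sum>k\<in>UNIV. gb k * cc k * (x$k)^2)"
    by (rule member_le_sum) (use pos in auto)
  finally have "0 < (\<Sum>k\<in>UNIV. gb k * cc k * (x$k)^2)" .
  moreover have "q x v = 1/2 * (\<Sum>k\<in>UNIV. gb k * cc k * (x$k)^2)"
    using True by (simp add: q_def Qv_def wv0 sum_distrib_left algebra_simps)
  ultimately show ?thesis by simp
qed

lemma Qv_hom: "Qv (t *\<^sub>R v) = t^2 * Qv v"
proof -
  have "(\<Sum>i\<in>UNIV. FF i * (t *\<^sub>R v)$i * (t *\<^sub>R v)$i) = t^2 * (\<Sum>i\<in>UNIV. FF i * v$i * v$i)"
    unfolding sum_distrib_left by (intro sum.cong refl) (simp add: algebra_simps power2_eq_square)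
  moreover have "(\<Sum>k\<in>UNIV. bb k * cc k * ((t *\<^sub>R v)$pe k * (t *\<^sub>R v)$ne k + (t *\<^sub>R v)$ne k * (t *\<^sub>R v)$pe k))
      = t^2 * (\<Sum>k\<in>UNIV. bb k * cc k * (v$pe k * v$ne k + v$ne k * v$pe k))"
    unfolding sum_distrib_left by (intro sum.cong refl) (simp add: algebra_simps power2_eq_square)
  ultimately show ?thesis unfolding Qv_def by (simp add: right_diff_distrib)
qed

lemma q_hom: "q (t *\<^sub>R x) (t *\<^sub>R v) = t^2 * q x v"
proof -
  have w: "wv (t *\<^sub>R v) k = t * wv v k" for k by (simp add: wv_def field_simps)
  have "(\<Sum>k\<in>UNIV. 1/2 * gb k * cc k * ((t *\<^sub>R x)$k)^2 + (t *\<^sub>R x)$k * ss k * gb k * wv (t *\<^sub>R v) k)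
     = t^2 * (\<Sum>k\<in>UNIV. 1/2 * gb k * cc k * (x$k)^2 + x$k * ss k * gb k * wv v k)"
    unfolding sum_distrib_left by (intro sum.cong refl) (simp add: w algebra_simps power2_eq_square)
  then show ?thesis unfolding q_def Qv_hom by (simp add: distrib_left)
qed
lemma q_cont: "continuous_on UNIV (\<lambda>z. q (fst z) (snd z))"
  unfolding q_def Qv_def wv_def
  by (auto intro!: continuous_intros simp: Vb_ne)

lemma q_lower: "\<exists>a>0. \<forall>z. q (fst z) (snd z) \<ge> a * (norm z)^2"
proof -
  let ?S = "sphere (0::(real^'a) \<times> (real^'b)) 1"
  have "?S \<noteq> {}" by simp
  obtain u where u: "u \<in> ?S" and umin: "\<forall>y\<in>?S. q (fst u) (snd u) \<le> q (fst y) (snd y)"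
    using continuous_attains_inf[OF compact_sphere \<open>?S \<noteq> {}\<close> continuous_on_subset[OF q_cont]] by blast
  have "u \<noteq> 0" using u by auto
  then have a: "q (fst u) (snd u) > 0" using q_pos[of "fst u" "snd u"] by simp
  show ?thesis
  proof (intro exI[of _ "q (fst u) (snd u)"] conjI allI a)
    fix z :: "(real^'a) \<times> (real^'b)"
    show "q (fst u) (snd u) * (norm z)^2 \<le> q (fst z) (snd z)"
    proof (cases "z = 0")
      case True then show ?thesis by (simp add: q_def Qv_def wv_def zero_prod_def)
    next
      case False
      define y where "y = (1 / norm z) *\<^sub>R z"
      have yS: "y \<in> ?S" using False by (simp add: y_def)
      have zy: "z = norm z *\<^sub>R y" using False by (simp add: y_def)
      have "q (fst z) (snd z) = (norm z)^2 * q (fst y) (snd y)"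
      proof -
        have "q (fst z) (snd z) = q (norm z *\<^sub>R fst y) (norm z *\<^sub>R snd y)" by (metis zy fst_scaleR snd_scaleR)
        then show ?thesis by (simp only: q_hom)
      qed
      moreover have "q (fst u) (snd u) \<le> q (fst y) (snd y)" using umin yS by blast
      ultimately show ?thesis by (simp add: mult_left_mono mult.commute)
    qed
  qed
qed

end

context L2 begin

definition "Rk x v k =
   (bb k*(Vb$ne k* v$pe k + Vb$pe k* v$ne k) + bb k* v$pe k* v$ne k)*cc k*(x$k)^2/2
   + (Vb$pe k+v$pe k)*(Vb$ne k+v$ne k)*bb k*cc k*((1 - cos (x$k)) - (x$k)^2/2)
   + ss k*bb k* v$pe k* v$ne k*x$k
   + ss k*(Vb$pe k+v$pe k)*(Vb$ne k+v$ne k)*bb k*(sin (x$k) - x$k)"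

lemma edge_zero:
  "- ((Vb+v)$pe k * (Vb+v)$ne k * bb k * cos ((etab + x)$k)) + gb k * cc k - gb k * ss k * x$k
   + bb k * cc k * (v$pe k * Vb$ne k + v$ne k * Vb$pe k)
   + 1/2 * (bb k * cc k * (v$pe k * v$ne k + v$ne k * v$pe k))
   - (1/2 * gb k * cc k * (x$k)^2 + x$k * ss k * gb k * wv v k) - Rk x v k = 0"
proof -
  have "Vb$pe k \<noteq> 0" "Vb$ne k \<noteq> 0" by (rule Vb_ne)+
  then show ?thesis
    by (simp add: Rk_def gb_def bb_def wv_def cos_add cc_def ss_def field_simps power2_eq_square)
qed

lemma node_zero:
  "- (FF i * v$i * Vb$i) + 1/2 * (FF i * (Vb+v)$i * (Vb+v)$i) - 1/2 * (FF i * Vb$i * Vb$i) - 1/2 * (FF i * v$i * v$i) = 0"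
  by (simp add: algebra_simps)

end

context L2 begin

lemma edge_zero':
  "- ((Vb$pe k + v$pe k) * (Vb$ne k + v$ne k) * bb k * cos (etab$k + x$k)) + gb k * cc k - gb k * ss k * x$k
   + bb k * cc k * (v$pe k * Vb$ne k + v$ne k * Vb$pe k)
   + 1/2 * (bb k * cc k * (v$pe k * v$ne k + v$ne k * v$pe k))
   - (1/2 * gb k * cc k * (x$k)^2 + x$k * ss k * gb k * wv v k) - Rk x v k = 0"
  using edge_zero[where v=v and x=x and k=k] by simp

lemma node_zero':
  "- (FF i * v$i * Vb$i) + 1/2 * (FF i * (Vb$i + v$i) * (Vb$i + v$i)) - 1/2 * (FF i * Vb$i * Vb$i) - 1/2 * (FF i * v$i * v$i) = 0"
  by (simp add: algebra_simps)

lemma W2_decomp: "W2 pe ne B Xd Xdp Efd (etab + x) etab (Vb + v) Vb = q x v + (\<Sum>k\<in>UNIV. Rk x v k)"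
proof -
  have P1: "1 \<bullet> (Gamma pe ne B (Vb+v) *v vcos (etab+x)) = (\<Sum>k\<in>UNIV. (Vb$pe k + v$pe k) * (Vb$ne k + v$ne k) * bb k * cos (etab$k + x$k))"
    by (simp only: one_inner) (simp add: Gamma_def diagm_mv gam_def vcos_def bb_def)
  have P2: "1 \<bullet> (Gamma pe ne B Vb *v vcos etab) = (\<Sum>k\<in>UNIV. gb k * cc k)"
    by (simp only: one_inner) (simp add: Gamma_def diagm_mv gam_def vcos_def gb_def cc_def)
  have P3: "(Gamma pe ne B Vb *v vsin etab) \<bullet> (etab + x - etab) = (\<Sum>k\<in>UNIV. gb k * ss k * x$k)"
    by (simp add: inner_vec_def Gamma_def diagm_mv gam_def vsin_def gb_def ss_def)
  have P4: "Efd \<bullet> (Vb + v - Vb) = (\<Sum>i\<in>UNIV. FF i * v$i * Vb$i) - (\<Sum>k\<in>UNIV. bb k * cc k * (v$pe k * Vb$ne k + v$ne k * Vb$pe k))"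
  proof -
    have "Efd \<bullet> (Vb + v - Vb) = v \<bullet> (Eb *v Vb)" using equil by (simp add: Eb_def inner_commute)
    then show ?thesis by (simp add: Eb_form)
  qed
  have P5: "(Vb+v) \<bullet> (Fmat B Xd Xdp *v (Vb+v)) = (\<Sum>i\<in>UNIV. FF i * (Vb$i + v$i) * (Vb$i + v$i))"
    by (simp add: inner_vec_def Fmat_def diagm_mv FF_def algebra_simps)
  have P6: "Vb \<bullet> (Fmat B Xd Xdp *v Vb) = (\<Sum>i\<in>UNIV. FF i * Vb$i * Vb$i)"
    by (simp add: inner_vec_def Fmat_def diagm_mv FF_def algebra_simps)
  have N: "(\<Sum>i\<in>UNIV. - (FF i * v$i * Vb$i) + 1/2 * (FF i * (Vb$i + v$i) * (Vb$i + v$i)) - 1/2 * (FF i * Vb$i * Vb$i) - 1/2 * (FF i * v$i * v$i)) = 0"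
    by (rule sum.neutral) (use node_zero' in blast)
  have E: "(\<Sum>k\<in>UNIV. - ((Vb$pe k + v$pe k) * (Vb$ne k + v$ne k) * bb k * cos (etab$k + x$k)) + gb k * cc k - gb k * ss k * x$k
   + bb k * cc k * (v$pe k * Vb$ne k + v$ne k * Vb$pe k)
   + 1/2 * (bb k * cc k * (v$pe k * v$ne k + v$ne k * v$pe k))
   - (1/2 * gb k * cc k * (x$k)^2 + x$k * ss k * gb k * wv v k) - Rk x v k) = 0"
    by (rule sum.neutral) (use edge_zero' in blast)
  note N' = N[unfolded sum.distrib sum_subtractf sum_negf sum_distrib_left[symmetric]]
  note E' = E[unfolded sum.distrib sum_subtractf sum_negf sum_distrib_left[symmetric]]
  show ?thesis
    unfolding W2_def P1 P2 P3 P4 P5 P6 q_def Qv_def sum.distrib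
    using N' E' by (argo | smt (verit) | simp add: algebra_simps)
qed

end

context L2 begin

lemma bb_pos: "bb k > 0" using B_edge by (simp add: bb_def)

lemma Rk_bound:
  assumes r: "norm (x, v) \<le> 1"
  shows "\<bar>Rk x v k\<bar> \<le> 3 * bb k * (Vb$pe k + 1) * (Vb$ne k + 1) * norm (x, v)^3"
proof -
  let ?r = "norm (x, v)"
  have xk: "\<bar>x$k\<bar> \<le> ?r" using component_le_norm_cart[of x k] norm_fst_le[of x v] by linarith
  have p: "\<bar>v$pe k\<bar> \<le> ?r" using component_le_norm_cart[of v "pe k"] norm_snd_le[of v x] by linarith
  have q: "\<bar>v$ne k\<bar> \<le> ?r" using component_le_norm_cart[of v "ne k"] norm_snd_le[of v x] by linarith
  have y3: "\<bar>x$k\<bar>^3 \<le> ?r^3" by (rule power_mono[OF xk]) simp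
  have e1: "\<bar>(1 - cos (x$k)) - (x$k)^2/2\<bar> \<le> ?r^3/6"
  proof -
    have h: "\<bar>(1 - cos (x$k)) - (x$k)^2/2\<bar> = \<bar>cos (x$k) - (1 - (x$k)^2/2)\<bar>" by (simp add: abs_minus_commute)
    show ?thesis unfolding h using cos_rem[of "x$k"] y3 by linarith
  qed
  have e2: "\<bar>sin (x$k) - x$k\<bar> \<le> ?r^3/6"
    using sin_rem[of "x$k"] y3 by linarith
  have c: "\<bar>cc k\<bar> \<le> 1" by (simp add: cc_def)
  have s: "\<bar>ss k\<bar> \<le> 1" by (simp add: ss_def)
  show ?thesis unfolding Rk_def
    by (rule Rbound[OF xk p q norm_ge_zero r c s Vb_pos[rule_format] Vb_pos[rule_format] bb_pos e1 e2])
qed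

lemma main: "strict_local_min (\<lambda>(eta, V). W2 pe ne B Xd Xdp Efd eta etab V Vb) (etab, Vb)"
proof -
  obtain a where a0: "a > 0" and a: "\<And>z. q (fst z) (snd z) \<ge> a * (norm z)^2" using q_lower by blast
  define K where "K = (\<Sum>k\<in>UNIV. 3 * bb k * (Vb$pe k + 1) * (Vb$ne k + 1))"
  have K0: "K \<ge> 0" unfolding K_def
    by (intro sum_nonneg) (use bb_pos Vb_pos in \<open>auto intro!: mult_nonneg_nonneg simp: less_imp_le add_nonneg_nonneg\<close>)
  have Rsum: "\<bar>\<Sum>k\<in>UNIV. Rk x v k\<bar> \<le> K * norm (x, v)^3" if "norm (x, v) \<le> 1" for x v
  proof -
    have "\<bar>\<Sum>k\<in>UNIV. Rk x v k\<bar> \<le> (\<Sum>k\<in>UNIV. \<bar>Rk x v k\<bar>)" by (rule sum_abs)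
    also have "\<dots> \<le> (\<Sum>k\<in>UNIV. 3 * bb k * (Vb$pe k + 1) * (Vb$ne k + 1) * norm (x, v)^3)"
      by (rule sum_mono) (rule Rk_bound[OF that])
    also have "\<dots> = K * norm (x, v)^3" by (simp add: K_def sum_distrib_right)
    finally show ?thesis .
  qed
  have W0: "W2 pe ne B Xd Xdp Efd etab etab Vb Vb = 0" by (simp add: W2_def)
  define e where "e = min 1 (a / (K + 1))"
  have e0: "e > 0" using a0 K0 by (simp add: e_def)
  show ?thesis unfolding strict_local_min_def
  proof (intro exI[of _ e] conjI allI impI e0)
    fix z :: "(real^'a) \<times> (real^'b)"
    assume z: "z \<noteq> (etab, Vb) \<and> dist z (etab, Vb) < e"
    obtain eta V where zz: "z = (eta, V)" by (cases z)
    define x where "x = eta - etab"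
    define v where "v = V - Vb"
    have eta: "eta = etab + x" and V: "V = Vb + v" by (simp_all add: x_def v_def)
    have dz: "dist z (etab, Vb) = norm (x, v)" by (simp add: zz dist_norm x_def v_def)
    let ?r = "norm (x, v)"
    have r0: "?r > 0" using z zz by (auto simp: x_def v_def zero_prod_def)
    have re: "?r < e" using z dz by simp
    have r1: "?r \<le> 1" using re by (simp add: e_def)
    have rK: "?r * (K + 1) < a" using re K0 by (simp add: e_def field_simps)
    have "K * ?r \<le> ?r * (K + 1)" using r0 by (simp add: algebra_simps)
    then have "K * ?r < a" using rK by linarith
    then have pos: "0 < ?r^2 * (a - K * ?r)" using r0 by simp
    have "W2 pe ne B Xd Xdp Efd eta etab V Vb = q x v + (\<Sum>k\<in>UNIV. Rk x v k)"
      unfolding eta V by (rule W2_decomp)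
    also have "\<dots> \<ge> a * ?r^2 - K * ?r^3"
      using a[of "(x, v)"] Rsum[OF r1] by simp
    finally have "W2 pe ne B Xd Xdp Efd eta etab V Vb \<ge> ?r^2 * (a - K * ?r)"
      by (simp add: algebra_simps power3_eq_cube power2_eq_square)
    with pos have "W2 pe ne B Xd Xdp Efd eta etab V Vb > 0" by linarith
    then show "(\<lambda>(eta, V). W2 pe ne B Xd Xdp Efd eta etab V Vb) (etab, Vb) < (\<lambda>(eta, V). W2 pe ne B Xd Xdp Efd eta etab V Vb) z"
      using W0 zz by simp
  qed
qed

end

theorem lemma2:
  fixes pe ne :: "'m::finite \<Rightarrow> 'n::finite"
    and B :: "real^'n^'n" and Xd Xdp :: "real^'n" and Efd :: "real^'n"
    and etab :: "real^'m" and Vb :: "real^'n"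
  assumes graph: "simple_connected_graph pe ne"
    and B_sym: "\<forall>i j. B $ i $ j = B $ j $ i"
    and B_edge: "\<forall>k. B $ pe k $ ne k > 0"
    and B_diag: "\<forall>i. B $ i $ i < 0"
    and B_dom: "\<forall>i. \<bar>B $ i $ i\<bar> > (\<Sum>j\<in>neighbours pe ne i. \<bar>B $ i $ j\<bar>)"
    and X_pos: "\<forall>i. Xd $ i > Xdp $ i \<and> Xdp $ i > 0"
    and etab_range: "\<forall>k. - (pi/2) < etab $ k \<and> etab $ k < pi/2"
    and Vb_pos: "\<forall>i. Vb $ i > 0"
    and equil: "Emat pe ne B Xd Xdp etab *v Vb = Efd"
    and cond: "pos_def (Emat pe ne B Xd Xdp etab
                 - matrix_inv (diagm Vb) ** abs_mat (incidence pe ne) ** Gamma pe ne B Vb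
                   ** diagm (vsin etab) ** matrix_inv (diagm (vcos etab)) ** diagm (vsin etab)
                   ** transpose (abs_mat (incidence pe ne)) ** matrix_inv (diagm Vb))"
  shows "strict_local_min (\<lambda>(eta, V). W2 pe ne B Xd Xdp Efd eta etab V Vb) (etab, Vb)"
proof -
  interpret L2 pe ne B Xd Xdp Efd etab Vb
    by unfold_locales (use assms in auto)
  show ?thesis by (rule main)
qed

end
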